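(* Let $m\ge3$ and let $T_m$ be the set of permutations $\tau\in\mathcal{S}_m$ with $\tau_{m-1}=m$ and $\tau_m=m-1$. A permutation $\pi\in\mathcal{S}_n$ avoids every pattern in $T_m$ if and only if every element $(i,j)$ of its essential set $\mathcal{E}(\pi)$ has rank $\rho(i,j)\le m-3$.
   Context: A permutation $\pi\in\mathcal{S}_n$ avoids $\tau\in\mathcal{S}_k$ if there are no indices $i_1<\dots<i_k$ with $\pi_{i_1}\cdots\pi_{i_k}$ in the same relative order as $\tau_1\cdots\tau_k$. Represent $\pi$ by an $n\times n$ array, rows $i$ numbered top to bottom, columns $j$ left to right, with a dot in square $(i,\pi_i)$. The diagram $D(\pi)$ is the set of squares $(i,j)$ with $\pi_i>j$ and $\pi^{-1}(j)>i$. The essential set $\mathcal{E}(\pi)$ is the set of $(i,j)\in D(\pi)$ with $(i+1,j)\notin D(\pi)$ and $(i,j+1)\notin D(\pi)$ (squares outside the array count as not in $D(\pi)$). The rank of a square $(i,j)$ is $\rho(i,j)=\#\{k<i:\pi_k<j\}$. *)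

theory Defs
  imports "HOL-Combinatorics.Permutations"
begin

text \<open>A permutation of [n] is a function nat => nat that permutes {1..n}
  (and fixes everything else). Rows/columns are numbered 1..n.\<close>

definition contains_pattern :: "(nat \<Rightarrow> nat) \<Rightarrow> nat \<Rightarrow> (nat \<Rightarrow> nat) \<Rightarrow> nat \<Rightarrow> bool" where
  "contains_pattern \<pi> n \<tau> k \<longleftrightarrow>
     (\<exists>idx :: nat \<Rightarrow> nat. strict_mono_on {1..k} idx \<and> idx ` {1..k} \<subseteq> {1..n} \<and>
        (\<forall>a\<in>{1..k}. \<forall>b\<in>{1..k}. \<pi> (idx a) < \<pi> (idx b) \<longleftrightarrow> \<tau> a < \<tau> b))"

definition avoids :: "(nat \<Rightarrow> nat) \<Rightarrow> nat \<Rightarrow> (nat \<Rightarrow> nat) \<Rightarrow> nat \<Rightarrow> bool" where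
  "avoids \<pi> n \<tau> k \<longleftrightarrow> \<not> contains_pattern \<pi> n \<tau> k"

definition diagram :: "(nat \<Rightarrow> nat) \<Rightarrow> nat \<Rightarrow> (nat \<times> nat) set" where
  "diagram \<pi> n = {(i, j). i \<in> {1..n} \<and> j \<in> {1..n} \<and> \<pi> i > j \<and> inv \<pi> j > i}"

definition essential_set :: "(nat \<Rightarrow> nat) \<Rightarrow> nat \<Rightarrow> (nat \<times> nat) set" where
  "essential_set \<pi> n = {(i, j). (i, j) \<in> diagram \<pi> n \<and> (i + 1, j) \<notin> diagram \<pi> n
                                \<and> (i, j + 1) \<notin> diagram \<pi> n}"

definition rank :: "(nat \<Rightarrow> nat) \<Rightarrow> nat \<Rightarrow> nat \<Rightarrow> nat" where
  "rank \<pi> i j = card {k \<in> {1..<i}. \<pi> k < j}"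

definition T_set :: "nat \<Rightarrow> (nat \<Rightarrow> nat) set" where
  "T_set m = {\<tau>. \<tau> permutes {1..m} \<and> \<tau> (m - 1) = m \<and> \<tau> m = m - 1}"

end

theory Submission
  imports Defs
begin

lemma rank_perm:
  fixes g :: "nat \<Rightarrow> nat" and k :: nat
  assumes inj: "inj_on g {1..k}"
  defines "\<tau> \<equiv> \<lambda>a. if a \<in> {1..k} then card {b\<in>{1..k}. g b \<le> g a} else a"
  shows "\<tau> permutes {1..k} \<and> (\<forall>a\<in>{1..k}. \<forall>b\<in>{1..k}. g a < g b \<longleftrightarrow> \<tau> a < \<tau> b)"
proof -
  have lt: "\<tau> a < \<tau> b" if "a \<in> {1..k}" "b \<in> {1..k}" "g a < g b" for a b
  proof -
    have "b \<in> {c\<in>{1..k}. g c \<le> g b}" "b \<notin> {c\<in>{1..k}. g c \<le> g a}"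
      using that by auto
    moreover have "{c\<in>{1..k}. g c \<le> g a} \<subseteq> {c\<in>{1..k}. g c \<le> g b}"
      using that by auto
    ultimately have "{c\<in>{1..k}. g c \<le> g a} \<subset> {c\<in>{1..k}. g c \<le> g b}"
      by blast
    then have "card {c\<in>{1..k}. g c \<le> g a} < card {c\<in>{1..k}. g c \<le> g b}"
      by (intro psubset_card_mono) auto
    then show ?thesis using that by (simp add: \<tau>_def)
  qed
  have le: "\<tau> b \<le> \<tau> a" if "a \<in> {1..k}" "b \<in> {1..k}" "g b \<le> g a" for a b
  proof -
    have "{c\<in>{1..k}. g c \<le> g b} \<subseteq> {c\<in>{1..k}. g c \<le> g a}"
      using that by auto
    then have "card {c\<in>{1..k}. g c \<le> g b} \<le> card {c\<in>{1..k}. g c \<le> g a}"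
      by (intro card_mono) auto
    then show ?thesis using that by (simp add: \<tau>_def)
  qed
  have ord: "\<forall>a\<in>{1..k}. \<forall>b\<in>{1..k}. g a < g b \<longleftrightarrow> \<tau> a < \<tau> b"
    using lt le by (meson leD linorder_not_less)
  have into: "\<tau> ` {1..k} \<subseteq> {1..k}"
  proof
    fix y assume "y \<in> \<tau> ` {1..k}"
    then obtain a where a: "a \<in> {1..k}" "y = \<tau> a" by auto
    have "a \<in> {b\<in>{1..k}. g b \<le> g a}" using a by auto
    then have "card {b\<in>{1..k}. g b \<le> g a} \<ge> 1"
      by (metis (no_types, lifting) One_nat_def Suc_leI card_gt_0_iff empty_iff finite_atLeastAtMost finite_subset mem_Collect_eq subsetI)
    moreover have "card {b\<in>{1..k}. g b \<le> g a} \<le> card {1..k}"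
      by (intro card_mono) auto
    ultimately show "y \<in> {1..k}" using a by (simp add: \<tau>_def)
  qed
  have injt: "inj_on \<tau> {1..k}"
  proof (rule inj_onI)
    fix a b assume ab: "a \<in> {1..k}" "b \<in> {1..k}" "\<tau> a = \<tau> b"
    show "a = b"
    proof (rule ccontr)
      assume "a \<noteq> b"
      then have "g a \<noteq> g b" using inj ab by (meson inj_onD)
      then show False using lt ab by (metis less_irrefl linorder_neq_iff)
    qed
  qed
  have "\<tau> ` {1..k} = {1..k}" using endo_inj_surj[OF _ into injt] by simp
  then have "bij_betw \<tau> {1..k} {1..k}" using injt by (simp add: bij_betw_def)
  moreover have "\<tau> x = x" if "x \<notin> {1..k}" for x unfolding \<tau>_def using that by (simp only: if_not_P if_False)
  ultimately have "\<tau> permutes {1..k}" by (rule bij_imp_permutes)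
  with ord show ?thesis by blast
qed

lemma lemA:
  assumes "\<tau> \<in> T_set m" "m \<ge> 3" "\<pi> permutes {1..n}" "contains_pattern \<pi> n \<tau> m"
  shows "\<exists>(i, j)\<in>diagram \<pi> n. rank \<pi> i j \<ge> m - 2"
proof -
  have tp: "\<tau> permutes {1..m}" "\<tau> (m - 1) = m" "\<tau> m = m - 1" using assms(1) by (auto simp: T_set_def)
  obtain idx where sm: "strict_mono_on {1..m} idx" and im: "idx ` {1..m} \<subseteq> {1..n}"
    and ord: "\<forall>a\<in>{1..m}. \<forall>b\<in>{1..m}. \<pi> (idx a) < \<pi> (idx b) \<longleftrightarrow> \<tau> a < \<tau> b"
    using assms(4) unfolding contains_pattern_def by blast
  define p where "p = idx (m - 1)"
  define q where "q = idx m"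
  have mm: "m - 1 \<in> {1..m}" "m \<in> {1..m}" using assms(2) by auto
  have pq: "p < q" unfolding p_def q_def using sm mm assms(2)
    by (simp add: strict_mono_on_def)
  have piq: "\<pi> q < \<pi> p" using ord mm tp assms(2) unfolding p_def q_def by auto
  have pn: "p \<in> {1..n}" "q \<in> {1..n}" using im mm unfolding p_def q_def by (meson image_subset_iff)+
  have injt: "inj \<tau>" using tp(1) permutes_inj by blast
  define S where "S = {k \<in> {1..<p}. \<pi> k < \<pi> q}"
  have sub: "idx ` {1..m-2} \<subseteq> S"
  proof
    fix x assume "x \<in> idx ` {1..m-2}"
    then obtain a where a: "a \<in> {1..m-2}" "x = idx a" by auto
    have a1: "a \<in> {1..m}" using a by auto
    have "\<tau> a \<in> {1..m}" proof -
      have "(\<tau> a \<in> {1..m}) = (a \<in> {1..m})" by (rule permutes_in_image[OF tp(1)])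
      then show ?thesis using a1 by blast
    qed
    then have t1: "\<tau> a \<le> m" by simp
    have "a \<noteq> m" "a \<noteq> m - 1" using a assms(2) by auto
    then have "\<tau> a \<noteq> \<tau> m" "\<tau> a \<noteq> \<tau> (m-1)" using injt
      by (metis injD)+
    then have "\<tau> a \<noteq> m - 1" "\<tau> a \<noteq> m" using tp(2,3) by metis+
    with t1 have "\<tau> a < m - 1" by arith
    then have "\<tau> a < \<tau> m" by (simp only: tp(3))
    then have "\<pi> x < \<pi> q" using ord a1 mm a unfolding q_def by auto
    moreover have "x < p" using sm a1 mm a unfolding p_def
      by (auto simp: strict_mono_on_def)
    moreover have "x \<in> {1..n}" using im a1 a(2) by blast
    then have "x \<ge> 1" by simp
    ultimately show "x \<in> S" unfolding S_def by simp
  qed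
  have "inj_on idx {1..m-2}"
    using strict_mono_on_imp_inj_on[OF sm] by (rule inj_on_subset) auto
  then have "card (idx ` {1..m-2}) = m - 2" by (simp add: card_image)
  moreover have "card (idx ` {1..m-2}) \<le> card S"
    using sub by (intro card_mono) (auto simp: S_def)
  ultimately have r: "rank \<pi> p (\<pi> q) \<ge> m - 2" unfolding rank_def S_def by simp
  have "\<pi> q \<in> {1..n}" by (rule iffD2[OF permutes_in_image[OF assms(3)] pn(2)])
  then have "(p, \<pi> q) \<in> diagram \<pi> n"
    using pn piq pq assms(3) permutes_inverses(2)[OF assms(3)]
    by (auto simp: diagram_def permutes_in_image)
  with r show ?thesis by blast
qed

lemma lemC:
  assumes "(i, j) \<in> diagram \<pi> n" "rank \<pi> i j \<ge> r"
  shows "\<exists>(i', j')\<in>essential_set \<pi> n. rank \<pi> i' j' \<ge> r"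
  using assms
proof (induction "2*n + 2 - i - j" arbitrary: i j rule: less_induct)
  case less
  show ?case
  proof (cases "(i, j) \<in> essential_set \<pi> n")
    case True
    then show ?thesis using less.prems by blast
  next
    case False
    then have "(i+1, j) \<in> diagram \<pi> n \<or> (i, j+1) \<in> diagram \<pi> n"
      using less.prems(1) by (auto simp: essential_set_def)
    then show ?thesis
    proof
      assume d: "(i+1, j) \<in> diagram \<pi> n"
      have "rank \<pi> i j \<le> rank \<pi> (i+1) j" unfolding rank_def by (intro card_mono) auto
      moreover have "2*n+2 - (i+1) - j < 2*n+2-i-j" using d by (auto simp: diagram_def)
      ultimately show ?thesis using less.hyps[OF _ d] less.prems(2) by (meson le_trans)
    next
      assume d: "(i, j+1) \<in> diagram \<pi> n"
      have "rank \<pi> i j \<le> rank \<pi> i (j+1)" unfolding rank_def by (intro card_mono) auto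
      moreover have "2*n+2 - i - (j+1) < 2*n+2-i-j" using d by (auto simp: diagram_def)
      ultimately show ?thesis using less.hyps[OF _ d] less.prems(2) by (meson le_trans)
    qed
  qed
qed

lemma lemB:
  assumes m3: "m \<ge> 3" and pp: "\<pi> permutes {1..n}" and dg: "(i, j) \<in> diagram \<pi> n"
    and rk: "rank \<pi> i j \<ge> m - 2"
  shows "\<exists>\<tau>\<in>T_set m. contains_pattern \<pi> n \<tau> m"
proof -
  define S where "S = {k \<in> {1..<i}. \<pi> k < j}"
  have fS: "finite S" unfolding S_def by simp
  have "card S \<ge> m - 2" using rk unfolding rank_def S_def by simp
  then obtain S' where S': "S' \<subseteq> S" "card S' = m - 2" "finite S'"
    by (rule obtain_subset_with_card_n)
  define xs where "xs = sorted_list_of_set S'"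
  have xs: "length xs = m - 2" "set xs = S'" "sorted_wrt (<) xs"
    using S' unfolding xs_def by (auto simp: strict_sorted_iff)
  have ij: "i \<in> {1..n}" "j \<in> {1..n}" "\<pi> i > j" "inv \<pi> j > i"
    using dg by (auto simp: diagram_def)
  define q where "q = inv \<pi> j"
  have pq: "\<pi> q = j" unfolding q_def by (rule permutes_inverses(1)[OF pp])
  have qi: "q > i" using ij unfolding q_def by simp
  have qn: "q \<in> {1..n}" unfolding q_def using ij(2) permutes_inv[OF pp]
    by (meson permutes_in_image)
  define idx where "idx a = (if a \<le> m - 2 then xs ! (a - 1) else if a = m - 1 then i else q)" for a
  have xsS: "xs ! (a - 1) \<in> S" if "a \<in> {1..m-2}" for a
  proof -
    have "a - 1 < length xs" using that xs(1) by auto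
    then have "xs ! (a - 1) \<in> set xs" by (rule nth_mem)
    then show ?thesis using xs(2) S'(1) by blast
  qed
  have low: "idx a \<in> S" if "a \<in> {1..m-2}" for a
    using xsS[OF that] that unfolding idx_def by simp
  have lowS: "k \<ge> 1 \<and> k < i \<and> \<pi> k < j" if "k \<in> S" for k using that unfolding S_def by auto
  have sm: "strict_mono_on {1..m} idx"
  proof (rule strict_mono_onI)
    fix r s assume rs: "r \<in> {1..m}" "s \<in> {1..m}" "r < s"
    show "idx r < idx s"
    proof (cases "s \<le> m - 2")
      case True
      then have "xs ! (r - 1) < xs ! (s - 1)" using rs xs
        by (intro sorted_wrt_nth_less[where P="(<)"]) auto
      then show ?thesis using True rs unfolding idx_def by simp
    next
      case False
      have r2: "r \<le> m - 1" using rs by simp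
      show ?thesis
      proof (cases "r \<le> m - 2")
        case True
        have "idx r < i" using low[of r] lowS True rs by auto
        then show ?thesis using False qi unfolding idx_def by auto
      next
        case False2: False
        then have "r = m - 1" "s = m" using rs False by auto
        then show ?thesis using qi m3 unfolding idx_def by auto
      qed
    qed
  qed
  have imn: "idx ` {1..m} \<subseteq> {1..n}"
  proof
    fix x assume "x \<in> idx ` {1..m}"
    then obtain a where a: "a \<in> {1..m}" "x = idx a" by auto
    show "x \<in> {1..n}"
    proof (cases "a \<le> m - 2")
      case True
      then show ?thesis using low[of a] lowS[of x] a ij by auto
    next
      case False
      then show ?thesis using a ij qn unfolding idx_def by auto
    qed
  qed
  define g where "g a = \<pi> (idx a)" for a
  have "inj_on g {1..m}"
  proof -
    have i1: "inj_on idx {1..m}" by (rule strict_mono_on_imp_inj_on[OF sm])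
    have i2: "inj \<pi>" using pp by (rule permutes_inj)
    have "inj_on (\<pi> \<circ> idx) {1..m}" by (rule comp_inj_on[OF i1 inj_on_subset[OF i2 subset_UNIV]])
    moreover have "g = \<pi> \<circ> idx" by (rule ext) (simp add: g_def)
    ultimately show ?thesis by simp
  qed
  define \<tau> where "\<tau> = (\<lambda>a. if a \<in> {1..m} then card {b\<in>{1..m}. g b \<le> g a} else a)"
  have rp: "\<tau> permutes {1..m} \<and> (\<forall>a\<in>{1..m}. \<forall>b\<in>{1..m}. g a < g b \<longleftrightarrow> \<tau> a < \<tau> b)"
    unfolding \<tau>_def by (rule rank_perm) fact
  have nle: "\<not> (m - 1 \<le> m - 2)" "\<not> (m \<le> m - 2)" "m \<noteq> m - 1" using m3 by arith+
  have gm1: "g (m - 1) = \<pi> i" using nle unfolding g_def idx_def by simp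
  have gm: "g m = j" using nle pq unfolding g_def idx_def by simp
  have glow: "g b < j" if "b \<in> {1..m}" "b \<le> m - 2" for b
  proof -
    have "idx b \<in> S" using that by (intro low) simp
    then have "\<pi> (idx b) < j" using lowS by blast
    then show ?thesis by (simp add: g_def)
  qed
  have "{b\<in>{1..m}. g b \<le> g (m - 1)} = {1..m}"
  proof -
    have "g b \<le> \<pi> i" if "b \<in> {1..m}" for b
    proof (cases "b \<le> m - 2")
      case True then show ?thesis using glow[of b] that ij by auto
    next
      case False
      then have "b = m - 1 \<or> b = m" using that by auto
      then show ?thesis using gm1 gm ij by auto
    qed
    then show ?thesis using gm1 by auto
  qed
  then have t1: "\<tau> (m - 1) = m" unfolding \<tau>_def using m3 by simp
  have "{b\<in>{1..m}. g b \<le> g m} = {1..m} - {m - 1}"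
  proof -
    have "g b \<le> j \<longleftrightarrow> b \<noteq> m - 1" if "b \<in> {1..m}" for b
    proof (cases "b \<le> m - 2")
      case True then show ?thesis using glow[of b] that m3 by auto
    next
      case False
      then have "b = m - 1 \<or> b = m" using that by auto
      then show ?thesis using gm1 gm ij m3 by auto
    qed
    then show ?thesis using gm by auto
  qed
  then have t2: "\<tau> m = m - 1" unfolding \<tau>_def using m3 by simp
  have "\<tau> \<in> T_set m" using rp t1 t2 unfolding T_set_def by simp
  moreover have "contains_pattern \<pi> n \<tau> m"
    unfolding contains_pattern_def using sm imn rp unfolding g_def by blast
  ultimately show ?thesis by blast
qed

theorem theorem5p1:
  fixes m n :: nat and \<pi> :: "nat \<Rightarrow> nat"
  assumes "m \<ge> 3" and "\<pi> permutes {1..n}"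
  shows "(\<forall>\<tau>\<in>T_set m. avoids \<pi> n \<tau> m) \<longleftrightarrow>
         (\<forall>(i, j)\<in>essential_set \<pi> n. rank \<pi> i j \<le> m - 3)"
proof -
  have key: "(\<exists>\<tau>\<in>T_set m. contains_pattern \<pi> n \<tau> m) \<longleftrightarrow>
        (\<exists>(i, j)\<in>essential_set \<pi> n. rank \<pi> i j \<ge> m - 2)"
  proof
    assume "\<exists>\<tau>\<in>T_set m. contains_pattern \<pi> n \<tau> m"
    then obtain \<tau> where "\<tau> \<in> T_set m" "contains_pattern \<pi> n \<tau> m" by blast
    then obtain i j where "(i, j) \<in> diagram \<pi> n" "rank \<pi> i j \<ge> m - 2"
      using lemA assms by blast
    then show "\<exists>(i, j)\<in>essential_set \<pi> n. rank \<pi> i j \<ge> m - 2" by (rule lemC)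
  next
    assume "\<exists>(i, j)\<in>essential_set \<pi> n. rank \<pi> i j \<ge> m - 2"
    then obtain i j where "(i, j) \<in> essential_set \<pi> n" "rank \<pi> i j \<ge> m - 2" by blast
    moreover then have "(i, j) \<in> diagram \<pi> n" by (simp add: essential_set_def)
    ultimately show "\<exists>\<tau>\<in>T_set m. contains_pattern \<pi> n \<tau> m" using lemB assms by blast
  qed
  have "(rank \<pi> i j \<le> m - 3) \<longleftrightarrow> \<not> (rank \<pi> i j \<ge> m - 2)" for i j
    using assms(1) by arith
  then show ?thesis using key unfolding avoids_def by auto
qed

end
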